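(* Let $R$ be a ring and $G$ a group such that the group ring $RG$ is a DT ring and $2\in\Delta(R)$. Then $G$ is a $2$-group.
   Context: All rings are associative with identity; $U(R)$ is the group of units. $\Delta(R)=\{x\in R: x+u\in U(R)\text{ for all }u\in U(R)\}$. $\mathrm{Tr}(R)=\{x\in R: x^3=x\}$. A ring $R$ is a DT ring if every $r\in R$ can be written $r=e+d$ with $e\in\mathrm{Tr}(R)$ and $d\in\Delta(R)$. $RG$ denotes the group ring. *)

theory Defs
  imports "HOL-Library.Poly_Mapping"
begin

definition units_of_ring :: "'a::ring_1 set" where
  "units_of_ring = {u. \<exists>v. u * v = 1 \<and> v * u = 1}"

definition Delta :: "'a::ring_1 set" where
  "Delta = {x. \<forall>u \<in> units_of_ring. x + u \<in> units_of_ring}"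

definition Tr :: "'a::ring_1 set" where
  "Tr = {x. x ^ 3 = x}"

definition DT_ring :: "'a::ring_1 itself \<Rightarrow> bool" where
  "DT_ring _ \<longleftrightarrow> (\<forall>r::'a. \<exists>e d. r = e + d \<and> e \<in> Tr \<and> d \<in> Delta)"

text \<open>The group ring RG is modelled as the ring of finitely supported functions
  g =>0 r (finitely supported functions) with convolution product; the group G is written additively
  (class group_add, not necessarily commutative).\<close>

definition gpow :: "'g::group_add \<Rightarrow> nat \<Rightarrow> 'g" where
  "gpow g n = ((\<lambda>x. g + x) ^^ n) 0"

definition two_group :: "'g::group_add itself \<Rightarrow> bool" where
  "two_group _ \<longleftrightarrow> (\<forall>g::'g. \<exists>k. gpow g (2 ^ k) = 0)"

end

theory Submission
  imports Defs
begin

lemma unit_mult: "u \<in> units_of_ring \<Longrightarrow> v \<in> units_of_ring \<Longrightarrow> (u*v::'a::ring_1) \<in> units_of_ring"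
  unfolding units_of_ring_def
proof clarify
  fix u' v' assume a: "u*u' = 1" "u'*u = 1" "v*v' = 1" "v'*v=(1::'a)"
  have "u*v*(v'*u') = u*(v*v')*u'" by (simp add: mult.assoc)
  then have "u*v*(v'*u') = 1" using a(1,3) by simp
  moreover have "(v'*u')*(u*v) = v'*(u'*u)*v" by (simp add: mult.assoc)
  then have "(v'*u')*(u*v) = 1" using a(2,4) by simp
  ultimately show "\<exists>w. u*v*w = 1 \<and> w*(u*v) = 1" by blast
qed

lemma unit_neg: "u \<in> units_of_ring \<Longrightarrow> (-u::'a::ring_1) \<in> units_of_ring"
  unfolding units_of_ring_def
proof clarify
  fix v assume "u * v = 1" "v * u = (1::'a)"
  then show "\<exists>w. - u * w = 1 \<and> w * - u = 1" by (intro exI[of _ "-v"]) simp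
qed

lemma unit_one: "(1::'a::ring_1) \<in> units_of_ring"
  unfolding units_of_ring_def by auto

lemma Delta_unit: "d \<in> Delta \<Longrightarrow> u \<in> units_of_ring \<Longrightarrow> (d + u::'a::ring_1) \<in> units_of_ring"
  unfolding Delta_def by auto

lemma Delta_zero: "(0::'a::ring_1) \<in> Delta"
  unfolding Delta_def by auto

lemma Delta_neg: "(d::'a::ring_1) \<in> Delta \<Longrightarrow> -d \<in> Delta"
  unfolding Delta_def
proof clarify
  fix u :: 'a assume "\<forall>u\<in>units_of_ring. d + u \<in> units_of_ring" "u \<in> units_of_ring"
  then have "d + (-u) \<in> units_of_ring" using unit_neg by blast
  then have "-(d + (-u)) \<in> units_of_ring" by (rule unit_neg)
  then show "-d + u \<in> units_of_ring" by simp
qed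

lemma Delta_add: "(d::'a::ring_1) \<in> Delta \<Longrightarrow> e \<in> Delta \<Longrightarrow> d + e \<in> Delta"
  unfolding Delta_def by (simp add: add.assoc)

lemma Delta_lmul: "(d::'a::ring_1) \<in> Delta \<Longrightarrow> e \<in> units_of_ring \<Longrightarrow> e * d \<in> Delta"
  unfolding Delta_def
proof clarify
  fix u :: 'a assume h: "\<forall>u\<in>units_of_ring. d + u \<in> units_of_ring" "u \<in> units_of_ring" "e \<in> units_of_ring"
  then obtain e' where e': "e*e' = 1" "e'*e = 1" unfolding units_of_ring_def by blast
  then have "e' \<in> units_of_ring" unfolding units_of_ring_def by blast
  then have "d + e'*u \<in> units_of_ring" using h unit_mult by blast
  then have "e * (d + e'*u) \<in> units_of_ring" using h unit_mult by blast
  moreover have "e * (d + e'*u) = e*d + u" by (simp add: distrib_left e'(1) flip: mult.assoc)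
  ultimately show "e*d + u \<in> units_of_ring" by simp
qed

lemma Delta_rmul: "(d::'a::ring_1) \<in> Delta \<Longrightarrow> e \<in> units_of_ring \<Longrightarrow> d * e \<in> Delta"
  unfolding Delta_def
proof clarify
  fix u :: 'a assume h: "\<forall>u\<in>units_of_ring. d + u \<in> units_of_ring" "u \<in> units_of_ring" "e \<in> units_of_ring"
  then obtain e' where e': "e*e' = 1" "e'*e = 1" unfolding units_of_ring_def by blast
  then have "e' \<in> units_of_ring" unfolding units_of_ring_def by blast
  then have "d + u*e' \<in> units_of_ring" using h unit_mult by blast
  then have "(d + u*e') * e \<in> units_of_ring" using h unit_mult by blast
  moreover have "(d + u*e') * e = d*e + u" by (simp add: distrib_right e'(2) mult.assoc)
  ultimately show "d*e + u \<in> units_of_ring" by simp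
qed

lemma DT_sq:
  assumes "DT_ring TYPE('a::ring_1)" "(u::'a) \<in> units_of_ring"
  shows "u^2 - 1 \<in> Delta"
proof -
  obtain e d where ed: "u = e + d" "e \<in> Tr" "(d::'a) \<in> Delta"
    using assms(1) unfolding DT_ring_def by blast
  have eu: "e \<in> units_of_ring"
    using Delta_unit[OF Delta_neg[OF ed(3)] assms(2)] ed(1) by (simp add: add.commute)
  then obtain e' where e': "e*e' = 1" "e'*e = 1" unfolding units_of_ring_def by blast
  have e3: "e^3 = e" using ed(2) unfolding Tr_def by simp
  have ee: "e*e = 1"
  proof -
    have "e' * (e*e*e) = e' * e" using e3 by (simp add: power3_eq_cube)
    moreover have "e' * (e*e*e) = (e'*e)*(e*e)" by (simp add: mult.assoc)
    ultimately show ?thesis using e'(2) by simp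
  qed
  define a where "a = e*d"
  have aD: "a \<in> Delta" unfolding a_def using Delta_lmul ed(3) eu by blast
  have uea: "u = e*(1+a)" unfolding a_def using ee ed(1) by (simp add: distrib_left flip: mult.assoc)
  define b where "b = e*a*e"
  have bD: "b \<in> Delta" unfolding b_def using Delta_lmul Delta_rmul aD eu by blast
  have "u^2 = (e*(1+a)*e)*(1+a)" using uea by (simp add: power2_eq_square mult.assoc)
  also have "e*(1+a)*e = 1 + b" unfolding b_def using ee by (simp add: distrib_left distrib_right)
  finally have eq: "u^2 - 1 = b + (1+b)*a" by (simp add: algebra_simps)
  have ub: "1 + b \<in> units_of_ring" using Delta_unit[OF bD unit_one] by (simp add: add.commute)
  have "b + (1+b)*a \<in> Delta" by (rule Delta_add[OF bD Delta_lmul[OF aD ub]])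
  then show ?thesis by (simp only: eq)
qed



lemma gpow_0[simp]: "gpow g 0 = 0" by (simp add: gpow_def)
lemma gpow_Suc[simp]: "gpow g (Suc n) = g + gpow g n" by (simp add: gpow_def)
lemma gpow_add: "gpow (g::'g::group_add) (m+n) = gpow g m + gpow g n"
  by (induction m) (simp_all add: add.assoc)
lemma gpow_mult: "gpow (g::'g::group_add) (m*n) = gpow (gpow g m) n"
  by (induction n) (simp_all add: gpow_add)

lemma single_pow: "(Poly_Mapping.single (g::'g::group_add) (1::'r::ring_1))^n = Poly_Mapping.single (gpow g n) 1"
  by (induction n) (simp_all add: mult_single)

lemma single_unit: "(Poly_Mapping.single (g::'g::group_add) (1::'r::ring_1)) \<in> units_of_ring"
  unfolding units_of_ring_def mem_Collect_eq
  by (rule exI[of _ "Poly_Mapping.single (-g) 1"]) (simp add: mult_single)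

lemma single0_unit: "(r::'r::ring_1) \<in> units_of_ring \<Longrightarrow> (Poly_Mapping.single (0::'g::group_add) r) \<in> units_of_ring"
  unfolding units_of_ring_def mem_Collect_eq
  by (metis add_0 mult_single single_one)

lemma of_nat_odd_unit:
  assumes "(2::'r::ring_1) \<in> Delta" "odd m"
  shows "(of_nat m::'r) \<in> units_of_ring"
proof -
  obtain j where m: "m = 2*j + 1" using assms(2) oddE by blast
  have "(2 * of_nat j::'r) \<in> Delta"
  proof (induction j)
    case 0 then show ?case using Delta_zero by simp
  next
    case (Suc j)
    then have "2 * of_nat j + 2 \<in> (Delta::'r set)" using Delta_add assms(1) by blast
    then show ?case by (simp add: algebra_simps)
  qed
  then have "2 * of_nat j + 1 \<in> (units_of_ring::'r set)" using Delta_unit unit_one by blast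
  then show ?thesis using m by (simp add: add.commute)
qed

lemma lookup_single_mult:
  "Poly_Mapping.lookup (Poly_Mapping.single (a::'g::group_add) (1::'r::ring_1) * w) k = Poly_Mapping.lookup w (-a + k)"
proof -
  have "Poly_Mapping.lookup (Poly_Mapping.single a (1::'r) * w) k = (\<Sum>l. ((\<Sum>q. Poly_Mapping.lookup w q when k = l + q) when a = l))"
    by (simp add: lookup_mult lookup_single when_mult)
  also have "\<dots> = (\<Sum>q. Poly_Mapping.lookup w q when k = a + q)" by simp
  also have "\<dots> = (\<Sum>q. Poly_Mapping.lookup w q when q = -a + k)"
    by (rule Sum_any.cong, rule when_cong) (auto simp: minus_add_cancel eq_neg_iff_add_eq_0 add.assoc)
  also have "\<dots> = Poly_Mapping.lookup w (-a + k)" by simp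
  finally show ?thesis .
qed



lemma int_rec_contra:
  fixes f :: "int \<Rightarrow> 'r::ring_1"
  assumes fin: "finite {n. f n \<noteq> 0}"
    and eq: "\<And>n. f n + f (n-1) + f (n-2) = (if n = 0 then 1 else 0)"
  shows False
proof -
  let ?Z = "{n. f n \<noteq> 0}"
  have ne: "?Z \<noteq> {}"
  proof
    assume "?Z = {}"
    then have "f 0 = 0" "f (0-1) = 0" "f (0-2) = 0" by auto
    then show False using eq[of 0] by simp
  qed
  define N where "N = Max ?Z"
  define M where "M = Min ?Z"
  have NZ: "N \<in> ?Z" unfolding N_def using Max_in[OF fin ne] .
  have MZ: "M \<in> ?Z" unfolding M_def using Min_in[OF fin ne] .
  have aboveN: "f x = 0" if "x > N" for x
  proof (rule ccontr)
    assume "f x \<noteq> 0"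
    then have "x \<le> N" unfolding N_def using Max_ge[OF fin] by simp
    with that show False by simp
  qed
  have belowM: "f x = 0" if "x < M" for x
  proof (rule ccontr)
    assume "f x \<noteq> 0"
    then have "M \<le> x" unfolding M_def using Min_le[OF fin] by simp
    with that show False by simp
  qed
  have MN: "M \<le> N" unfolding M_def using Min_le[OF fin NZ] .
  have e1: "f (N+2) + f (N+2-1) + f (N+2-2) = (if N+2 = 0 then 1 else 0)" by (rule eq)
  have "f (N+2) = 0" "f (N+2-1) = 0" using aboveN by auto
  with e1 have "f N = (if N+2 = 0 then 1 else 0)" by simp
  with NZ have N2: "N = -2" by (simp split: if_splits)
  have e2: "f M + f (M-1) + f (M-2) = (if M = 0 then 1 else 0)" by (rule eq)
  have "f (M-1) = 0" "f (M-2) = 0" using belowM by auto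
  with e2 have "f M = (if M = 0 then 1 else 0)" by simp
  with MZ have "M = 0" by (simp split: if_splits)
  with N2 MN show False by simp
qed

definition tp :: "'g::group_add \<Rightarrow> int \<Rightarrow> 'g" where
  "tp a n = (if 0 \<le> n then gpow a (nat n) else gpow (-a) (nat (-n)))"

lemma tp_0[simp]: "tp a 0 = 0" by (simp add: tp_def)

lemma tp_succ: "tp a (n+1) = a + tp a n"
proof (cases "0 \<le> n")
  case True
  then have "nat (n+1) = Suc (nat n)" by simp
  then show ?thesis using True by (simp add: tp_def)
next
  case False
  define k where "k = nat (-n-1)"
  have k: "n = - int (Suc k)" using False unfolding k_def by simp
  have nk: "nat (-n) = Suc k" using k by simp
  have "tp a n = gpow (-a) (Suc k)" using False nk by (simp add: tp_def)
  then have "tp a n = -a + gpow (-a) k" by simp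
  moreover have "tp a (n+1) = gpow (-a) k"
  proof (cases "k = 0")
    case True then show ?thesis using k by simp
  next
    case False
    have "nat (-(n+1)) = k" using k by simp
    moreover have "\<not> 0 \<le> n+1" using k False by simp
    ultimately show ?thesis by (simp add: tp_def)
  qed
  ultimately show ?thesis by (simp add: add.assoc[symmetric])
qed

lemma tp_pred: "tp a (n-1) = -a + tp a n"
  using tp_succ[of a "n-1"] by (simp add: minus_add_cancel)

lemma tp_shift: "tp a (n + int k) = gpow a k + tp a n"
proof (induction k)
  case 0 then show ?case by simp
next
  case (Suc k)
  have eqk: "n + int (Suc k) = (n + int k) + 1" by simp
  have "tp a (n + int (Suc k)) = tp a ((n + int k) + 1)" by (simp only: eqk)
  also have "\<dots> = a + tp a (n + int k)" by (rule tp_succ)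
  finally show ?case using Suc by (simp add: add.assoc)
qed

lemma tp_inj:
  assumes inf: "\<And>n. n \<ge> 1 \<Longrightarrow> gpow (a::'g::group_add) n \<noteq> 0"
  shows "inj (tp a)"
proof -
  have *: "tp a m \<noteq> tp a n" if "m < n" for m n
  proof
    assume h: "tp a m = tp a n"
    define k where "k = nat (n - m)"
    have k: "n = m + int k" "k \<ge> 1" using \<open>m < n\<close> unfolding k_def by auto
    have "tp a n = gpow a k + tp a m" using k tp_shift by simp
    then have "gpow a k + tp a m = 0 + tp a m" using h by simp
    then have "gpow a k = 0" by (rule add_right_cancel[THEN iffD1])
    then show False using inf k(2) by blast
  qed
  show ?thesis
    by (rule injI) (metis * linorder_neqE)
qed



lemma geom: "(\<Sum>i<m. (x::'a::ring_1)^i) * (1 - x) = 1 - x^m"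
proof (induction m)
  case 0 then show ?case by simp
next
  case (Suc m)
  have "(\<Sum>i<Suc m. x^i) * (1 - x) = (\<Sum>i<m. x^i) * (1 - x) + x^m * (1 - x)"
    by (simp add: distrib_right)
  also have "\<dots> = 1 - x^m + (x^m - x^m * x)" using Suc by (simp add: right_diff_distrib)
  also have "\<dots> = 1 - x^m * x" by simp
  also have "x^m * x = x^Suc m" by (rule power_Suc2[symmetric])
  finally show ?case .
qed

lemma sum_Delta: "(\<And>i. i < (m::nat) \<Longrightarrow> (h i::'a::ring_1) \<in> Delta) \<Longrightarrow> (\<Sum>i<m. h i) \<in> Delta"
  by (induction m) (simp_all add: Delta_zero Delta_add)

lemma three_eq: "(x - 1) + (y - 1) + of_nat 3 = 1 + x + (y::'a::ring_1)"
  unfolding numeral_3_eq_3 by (simp add: algebra_simps)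

lemma odd_decomp: "(n::nat) \<ge> 1 \<Longrightarrow> \<exists>k m. n = 2^k * m \<and> odd m"
proof (induction n rule: less_induct)
  case (less n)
  show ?case
  proof (cases "odd n")
    case True then show ?thesis by (metis mult_1 power_0)
  next
    case False
    then obtain n' where n': "n = 2*n'" by (auto elim: evenE)
    with less.prems have "n' \<ge> 1" "n' < n" by auto
    with less.IH obtain k m where "n' = 2^k*m" "odd m" by blast
    then have "n = 2^(Suc k) * m" using n' by simp
    then show ?thesis using \<open>odd m\<close> by blast
  qed
qed

lemma single_eq_one: "Poly_Mapping.single (g::'g::group_add) (1::'r::ring_1) = 1 \<Longrightarrow> g = 0"
proof (rule ccontr)
  assume h: "Poly_Mapping.single g (1::'r) = 1" "g \<noteq> 0"
  have "Poly_Mapping.lookup (Poly_Mapping.single g (1::'r)) 0 = 0" using h(2) by (simp add: lookup_single_not_eq)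
  moreover have "Poly_Mapping.lookup (1::'g \<Rightarrow>\<^sub>0 'r) 0 = 1" by simp
  ultimately show False using h(1) by simp
qed



lemma not_unit_poly:
  assumes inf: "\<And>n. n \<ge> 1 \<Longrightarrow> gpow (a::'g::group_add) n \<noteq> 0"
  shows "(1 + Poly_Mapping.single a 1 + Poly_Mapping.single (a+a) 1) * w \<noteq> (1::'g \<Rightarrow>\<^sub>0 'r::ring_1)"
proof
  assume h: "(1 + Poly_Mapping.single a 1 + Poly_Mapping.single (a+a) 1) * w = (1::'g \<Rightarrow>\<^sub>0 'r)"
  define f where "f n = Poly_Mapping.lookup w (tp a n)" for n
  have inj: "inj (tp a)" using tp_inj inf by blast
  have fin: "finite {n. f n \<noteq> 0}"
  proof -
    have "{n. f n \<noteq> 0} = tp a -` {k. Poly_Mapping.lookup w k \<noteq> 0}" unfolding f_def by auto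
    moreover have "finite (tp a -` {k. Poly_Mapping.lookup w k \<noteq> 0})"
      by (rule finite_vimageI) (simp_all add: inj)
    ultimately show ?thesis by simp
  qed
  have eq: "f n + f (n-1) + f (n-2) = (if n = 0 then 1 else 0)" for n
  proof -
    have m1: "-a + tp a n = tp a (n-1)" by (simp add: tp_pred)
    have "tp a (n-2) = tp a (n-1-1)" by simp
    also have "\<dots> = -a + tp a (n-1)" by (rule tp_pred)
    also have "\<dots> = -a + (-a + tp a n)" by (simp only: tp_pred)
    also have "\<dots> = -(a+a) + tp a n" by (simp only: minus_add add.assoc)
    finally have m2: "-(a+a) + tp a n = tp a (n-2)" by (rule sym)
    have "(1 + Poly_Mapping.single a 1 + Poly_Mapping.single (a+a) 1) * w
       = w + Poly_Mapping.single a 1 * w + Poly_Mapping.single (a+a) (1::'r) * w"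
      by (simp only: distrib_right mult_1_left)
    then have "Poly_Mapping.lookup ((1 + Poly_Mapping.single a 1 + Poly_Mapping.single (a+a) 1) * w) (tp a n)
      = Poly_Mapping.lookup w (tp a n) + Poly_Mapping.lookup (Poly_Mapping.single a (1::'r) * w) (tp a n)
        + Poly_Mapping.lookup (Poly_Mapping.single (a+a) (1::'r) * w) (tp a n)"
      by (simp only: lookup_add)
    also have "\<dots> = f n + f (n-1) + f (n-2)"
      by (simp only: lookup_single_mult m1 m2 f_def)
    finally have lk: "Poly_Mapping.lookup ((1 + Poly_Mapping.single a 1 + Poly_Mapping.single (a+a) 1) * w) (tp a n)
      = f n + f (n-1) + f (n-2)" .
    moreover have "Poly_Mapping.lookup (1::'g \<Rightarrow>\<^sub>0 'r) (tp a n) = (if n = 0 then 1 else 0)"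
    proof -
      have "tp a n = 0 \<longleftrightarrow> n = 0" using injD[OF inj, of n 0] tp_0 by auto
      then show ?thesis by (simp add: lookup_one)
    qed
    ultimately show ?thesis using h lk by simp
  qed
  show False using int_rec_contra[OF fin eq] .
qed




theorem theorem3p10:
  assumes "DT_ring TYPE('g::group_add \<Rightarrow>\<^sub>0 'r::ring_1)"
    and "(2::'r) \<in> Delta"
  shows "two_group TYPE('g)"
  unfolding two_group_def
proof
  fix g :: 'g
  note DT = assms(1) and two = assms(2)
  define X where "X = Poly_Mapping.single g (1::'r)"
  have Xp: "X^j = Poly_Mapping.single (gpow g j) 1" for j unfolding X_def by (rule single_pow)
  have Xu: "X^j \<in> units_of_ring" for j unfolding Xp by (rule single_unit)
  have sq: "(X^j)^2 - 1 \<in> Delta" for j using DT_sq[OF DT Xu[of j]] .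
  have oddu: "(of_nat m :: 'g \<Rightarrow>\<^sub>0 'r) \<in> units_of_ring" if "odd m" for m
    using single0_unit[OF of_nat_odd_unit[OF two that], where 'g='g] by simp
  show "\<exists>k. gpow g (2^k) = 0"
  proof (cases "\<exists>n\<ge>1. gpow g n = 0")
    case True
    then obtain n where n: "n \<ge> 1" "gpow g n = 0" by blast
    obtain k m where km: "n = 2^k*m" "odd m" using odd_decomp[OF n(1)] by blast
    define T where "T = X^(2^(k+1))"
    have Ti: "T^i - 1 \<in> Delta" for i
    proof -
      have "T^i = X^(2^(k+1)*i)" by (simp add: T_def power_mult)
      also have "2^(k+1)*i = 2^k*i*(2::nat)" by simp
      also have "X^(2^k*i*2) = (X^(2^k*i))^2" by (simp only: power_mult)
      finally show ?thesis using sq[of "2^k*i"] by simp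
    qed
    have Tm: "T^m = 1"
    proof -
      have "T^m = X^(n*2)" unfolding T_def km(1) by (simp add: power_mult[symmetric] ac_simps)
      also have "\<dots> = Poly_Mapping.single (gpow g (n*2)) 1" by (rule Xp)
      also have "gpow g (n*2) = gpow (gpow g n) 2" by (rule gpow_mult)
      also have "\<dots> = 0" by (simp add: n(2) numeral_2_eq_2)
      finally show ?thesis by simp
    qed
    define s where "s = (\<Sum>i<m. T^i)"
    have sD: "(\<Sum>i<m. T^i - 1) \<in> Delta" by (rule sum_Delta) (rule Ti)
    have "(\<Sum>i<m. T^i - 1) = s - of_nat m" by (simp add: sum_subtractf s_def)
    then have "s = (\<Sum>i<m. T^i - 1) + of_nat m" by simp
    then have su: "s \<in> units_of_ring" using Delta_unit[OF sD oddu[OF km(2)]] by simp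
    have "s * (1 - T) = 0" unfolding s_def geom Tm by simp
    moreover obtain v where "v * s = 1" using su unfolding units_of_ring_def by blast
    ultimately have "1 - T = 0" by (metis mult.assoc mult_1_left mult_zero_right)
    then have "Poly_Mapping.single (gpow g (2^(k+1))) (1::'r) = 1" unfolding T_def Xp by simp
    then have "gpow g (2^(k+1)) = 0" by (rule single_eq_one)
    then show ?thesis by blast
  next
    case False
    then have inf: "gpow g n \<noteq> 0" if "n \<ge> 1" for n using that by auto
    define a where "a = gpow g 2"
    have infa: "gpow a n \<noteq> 0" if "n \<ge> 1" for n
      unfolding a_def gpow_mult[symmetric] using inf that by simp
    have t1: "X^2 = Poly_Mapping.single a 1" unfolding a_def by (rule Xp)
    have "(X^2)^2 = Poly_Mapping.single a 1 * Poly_Mapping.single a (1::'r)" unfolding t1 by (simp only: power2_eq_square)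
    then have t2: "(X^2)^2 = Poly_Mapping.single (a+a) 1" by (simp add: mult_single)
    have t0: "(X^1)^2 = Poly_Mapping.single a 1" using t1 by simp
    define p where "p = 1 + Poly_Mapping.single a 1 + Poly_Mapping.single (a+a) (1::'r)"
    have pe: "p = ((X^1)^2 - 1) + ((X^2)^2 - 1) + of_nat 3"
      unfolding p_def t2 t0 by (rule three_eq[symmetric])
    have Dd: "((X^1)^2 - 1) + ((X^2)^2 - 1) \<in> Delta" using Delta_add[OF sq sq] .
    have o3: "odd (3::nat)" by simp
    have "((X^1)^2 - 1) + ((X^2)^2 - 1) + of_nat 3 \<in> units_of_ring" by (rule Delta_unit[OF Dd oddu[OF o3]])
    then have "p \<in> units_of_ring" by (simp only: pe)
    then obtain w where "p * w = 1" unfolding units_of_ring_def by blast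
    with not_unit_poly[OF infa] show ?thesis unfolding p_def by blast
  qed
qed


end
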